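(* Let $m\ge1$ be an integer and $f(z)=\sum_{n\ge0}a_nz^{-n/m}$ a Gevrey-1 series whose Borel transform $\widetilde f(\zeta)=\sum_{n\ge1}\frac{a_n\zeta^{n/m-1}}{\Gamma(n/m)}$ extends analytically to $\Omega^\star$ with $|\widetilde f(\zeta)\zeta^{\frac{m-1}{m}}|\le Ae^{B|\zeta|}$ for all $\zeta\in\Omega^\star$, for some $A>0$, $B>0$. Define $d_n$ ($n\ge1$) by: for $l=1,\dots,m$, $\widetilde g_l(\xi)=\big(\frac{\xi}{1-e^{-\xi}}\big)^{\frac lm-1}\sum_{k\ge0}\frac{a_{l+mk}\xi^k}{\Gamma(\frac lm+k)}$ (principal branch, extended holomorphically to $\Delta$) and $\widetilde g_l(-\ln s)=\sum_{j\ge0}d_{l+mj}(1-s)^j$ for $s\in D(1,1)$. Then for every $C>\max(B,1)$ the series $\sum_{n\ge1}\frac{|d_n|}{(n/m)^C}$ converges.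
   Context: $\Delta$ is the image of the open disc $D(1,1)=\{s:|s-1|<1\}$ under $s\mapsto-\ln s$ (principal logarithm); $\Delta^\star=\Delta\setminus\{0\}$. $\mathbb{C}_m^\star$ is the $m$-sheeted covering of $\mathbb{C}^\star$ (points $(|x|,\arg x)$, $\arg x\in\mathbb{R}/2\pi m\mathbb{Z}$, projection $\pi(x)=|x|e^{i\arg x}$; $x^{k/m}$ has modulus $|x|^{k/m}$ and argument $\frac km\arg x$), and $\Omega^\star=\pi^{-1}(\Delta^\star)$. Gevrey-1 means $|a_n|\le CK^n\Gamma(1+n/m)$. *)

theory Defs
  imports "HOL-Analysis.Analysis"
begin

definition Delta :: "complex set" where
  "Delta = (\<lambda>s. - Ln s) ` ball 1 1"

text \<open>Omega* in logarithmic coordinates: a point x of the m-sheeted covering of C*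
  (modulus |x|, argument arg x in R / 2 pi m Z) is represented by w = ln |x| + i arg x,
  taken modulo 2 pi i m, so that pi(x) = exp w and x^(k/m) = exp((k/m) w).
  Omega* = pi^-1(Delta*) corresponds to the set below.\<close>
definition Omega_log :: "complex set" where
  "Omega_log = {w. exp w \<in> Delta - {0}}"

definition gevrey1 :: "nat \<Rightarrow> (nat \<Rightarrow> complex) \<Rightarrow> bool" where
  "gevrey1 m a \<longleftrightarrow> (\<exists>C K. \<forall>n. norm (a n) \<le> C * K ^ n * Gamma (1 + real n / real m))"

end

theory Submission
  imports Defs "HOL-Complex_Analysis.Complex_Analysis"
begin

lemma ball11_iff: "z \<in> ball (1::complex) 1 \<longleftrightarrow> (norm z)^2 < 2 * Re z"
proof -
  have "dist 1 z ^2 = (norm z)^2 - 2 * Re z + 1"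
    by (simp only: dist_norm cmod_power2) (simp add: power2_eq_square algebra_simps)
  moreover have "z \<in> ball 1 1 \<longleftrightarrow> (dist 1 z)^2 < 1"
    using abs_square_less_1[of "dist 1 z"] by (simp add: dist_commute)
  ultimately show ?thesis by linarith
qed

lemma exp_ball11_iff: "exp w \<in> ball (1::complex) 1 \<longleftrightarrow> exp (Re w) < 2 * cos (Im w)"
proof -
  have "(norm (exp w))^2 < 2 * Re (exp w) \<longleftrightarrow> exp (Re w) * exp (Re w) < exp (Re w) * (2 * cos (Im w))"
    by (simp add: power2_eq_square Re_exp algebra_simps)
  also have "\<dots> \<longleftrightarrow> exp (Re w) < 2 * cos (Im w)"
    by simp
  finally show ?thesis using ball11_iff by blast
qed

lemma Delta_char: "Delta = {\<xi>. \<bar>Im \<xi>\<bar> < pi \<and> exp (- \<xi>) \<in> ball 1 1}"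
proof (intro set_eqI iffI)
  fix \<xi> assume "\<xi> \<in> Delta"
  then obtain s where s: "s \<in> ball 1 1" "\<xi> = - Ln s" by (auto simp: Delta_def)
  have "s \<noteq> 0" using s by auto
  have "(norm s)^2 < 2 * Re s" using s(1) ball11_iff by blast
  moreover have "0 \<le> (norm s)^2" by simp
  ultimately have "0 < Re s" by linarith
  then have "\<bar>Im (Ln s)\<bar> < pi/2" by (rule Re_Ln_pos_lt_imp)
  then show "\<xi> \<in> {\<xi>. \<bar>Im \<xi>\<bar> < pi \<and> exp (- \<xi>) \<in> ball 1 1}"
    using s \<open>s \<noteq> 0\<close> by auto
next
  fix \<xi> assume "\<xi> \<in> {\<xi>. \<bar>Im \<xi>\<bar> < pi \<and> exp (- \<xi>) \<in> ball 1 1}"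
  then have h: "\<bar>Im \<xi>\<bar> < pi" "exp (- \<xi>) \<in> ball 1 1" by auto
  have "Ln (exp (- \<xi>)) = - \<xi>" using h(1) by (intro Ln_exp) auto
  then have "\<xi> = - Ln (exp (- \<xi>))" by simp
  then show "\<xi> \<in> Delta" unfolding Delta_def using h(2) by blast
qed

lemma open_Delta: "open Delta"
proof -
  have "Delta = {\<xi>. \<bar>Im \<xi>\<bar> < pi} \<inter> (\<lambda>\<xi>. exp (- \<xi>)) -` ball 1 1"
    by (auto simp: Delta_char)
  moreover have "open {\<xi>::complex. \<bar>Im \<xi>\<bar> < pi}"
    by (intro open_Collect_less continuous_intros)
  moreover have "open ((\<lambda>\<xi>::complex. exp (- \<xi>)) -` ball 1 1)"
    by (intro open_vimage continuous_intros) auto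
  ultimately show ?thesis by (metis open_Int)
qed

lemma zero_in_Delta: "0 \<in> Delta"
  by (simp add: Delta_char)

lemma Delta_exp_ne1: "\<xi> \<in> Delta \<Longrightarrow> \<xi> \<noteq> 0 \<Longrightarrow> exp (- \<xi>) \<noteq> 1"
proof
  assume "\<xi> \<in> Delta" "\<xi> \<noteq> 0" "exp (- \<xi>) = 1"
  then have "\<bar>Im \<xi>\<bar> < pi" by (auto simp: Delta_char)
  then have "Ln (exp (- \<xi>)) = - \<xi>" by (intro Ln_exp) auto
  with \<open>exp (- \<xi>) = 1\<close> \<open>\<xi> \<noteq> 0\<close> show False by simp
qed

lemma convex_mlncos: "convex_on {-(pi/2)<..<pi/2} (\<lambda>y. - ln (cos y))"
proof (rule convex_on_realI[where f'=tan])
  show "connected {-(pi/2)<..<pi/2::real}" by simp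
next
  fix x :: real assume x: "x \<in> {-(pi/2)<..<pi/2}"
  then have c: "cos x > 0" by (auto intro: cos_gt_zero_pi)
  show "((\<lambda>y. - ln (cos y)) has_real_derivative tan x) (at x)"
    using c by (auto intro!: derivative_eq_intros simp: tan_def)
next
  fix x y :: real assume "x \<in> {-(pi/2)<..<pi/2}" "y \<in> {-(pi/2)<..<pi/2}" "x \<le> y"
  then show "tan x \<le> tan y"
    by (cases "x = y") (auto intro!: less_imp_le[OF tan_monotone])
qed

lemma cos_powr_le: 
  assumes "\<bar>y\<bar> < pi/2" "0 \<le> t" "t \<le> 1"
  shows "cos y powr t \<le> cos (t * y)"
proof -
  have "- ln (cos ((1 - t) *\<^sub>R 0 + t *\<^sub>R y)) \<le> (1 - t) * (- ln (cos 0)) + t * (- ln (cos y))"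
  proof -
    have "y \<in> {-(pi/2)<..<pi/2}" using assms by (auto simp: abs_less_iff)
    from convex_onD[OF convex_mlncos, of t 0 y, OF assms(2,3) _ this] show ?thesis by simp
  qed
  then have "t * ln (cos y) \<le> ln (cos (t * y))" by simp
  moreover have "cos y > 0" using assms by (auto intro: cos_gt_zero_pi)
  moreover have "cos (t*y) > 0"
  proof -
    have "\<bar>t*y\<bar> \<le> \<bar>y\<bar>" using assms by (simp add: abs_mult mult_left_le_one_le)
    then show ?thesis using assms(1) by (intro cos_gt_zero_pi) linarith+
  qed
  ultimately have "exp (t * ln (cos y)) \<le> exp (ln (cos (t * y)))"
    by (simp only: exp_le_cancel_iff)
  also have "\<dots> = cos (t * y)" using \<open>cos (t*y) > 0\<close> by simp
  finally have "exp (t * ln (cos y)) \<le> cos (t * y)" .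
  then show ?thesis using \<open>cos y > 0\<close> \<open>cos (t*y) > 0\<close> by (simp add: powr_def)
qed

lemma cos_pos_abs_lt: 
  assumes "cos y > 0" "\<bar>y\<bar> < pi" shows "\<bar>y\<bar> < pi/2"
proof (rule ccontr)
  assume "\<not> \<bar>y\<bar> < pi/2"
  then have "cos \<bar>y\<bar> \<le> cos (pi/2)" using assms(2)
    by (intro cos_monotone_0_pi_le) auto
  then show False using assms(1) by simp
qed

lemma Delta_star:
  assumes "\<xi> \<in> Delta" "0 < t" "t \<le> 1"
  shows "of_real t * \<xi> \<in> Delta"
proof -
  define x y where "x = Re \<xi>" and "y = Im \<xi>"
  have y: "\<bar>y\<bar> < pi" and eb: "exp (- \<xi>) \<in> ball 1 1"
    using assms(1) by (auto simp: Delta_char y_def)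
  have e: "exp (- x) < 2 * cos y"
    using eb unfolding exp_ball11_iff by (simp add: x_def y_def)
  have "cos y > 0" using e exp_gt_zero[of "-x"] by linarith
  then have y2: "\<bar>y\<bar> < pi/2" using y cos_pos_abs_lt by blast
  have "exp (- (t * x)) = exp (- x) powr t"
    by (simp add: powr_def)
  also have "\<dots> < (2 * cos y) powr t"
    using e assms(2) by (intro powr_less_mono2) auto
  also have "\<dots> = 2 powr t * cos y powr t"
    using \<open>cos y > 0\<close> by (simp add: powr_mult)
  also have "\<dots> \<le> 2 * cos (t * y)"
  proof (rule mult_mono)
    show "2 powr t \<le> (2::real)" using powr_mono[of t 1 2] assms by simp
    show "cos y powr t \<le> cos (t * y)" using cos_powr_le[OF y2] assms by simp
  qed (use \<open>cos y > 0\<close> in auto)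
  finally have "exp (- (t * x)) < 2 * cos (t * y)" .
  moreover have "\<bar>t * y\<bar> < pi"
  proof -
    have "\<bar>t*y\<bar> \<le> \<bar>y\<bar>" using assms by (simp add: abs_mult mult_left_le_one_le)
    then show ?thesis using y by linarith
  qed
  moreover have "exp (- (of_real t * \<xi>)) \<in> ball 1 1"
    unfolding exp_ball11_iff using calculation by (simp add: x_def y_def)
  ultimately show ?thesis
    by (auto simp: Delta_char y_def)
qed

lemma open_Omega: "open Omega_log"
proof -
  have "Omega_log = exp -` (Delta - {0})" by (auto simp: Omega_log_def)
  moreover have "open (Delta - {0})" using open_Delta by auto
  moreover have "open (exp -` (Delta - {0}))"
    using \<open>open (Delta - {0})\<close> by (rule open_vimage) (intro continuous_intros)
  ultimately show ?thesis by simp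
qed

lemma exp_2piij: "exp (w + 2 * pi * \<i> * of_nat j) = exp w"
proof -
  have "w + 2 * pi * \<i> * of_nat j = w + \<i> * (of_int (int j) * (of_real pi * 2))"
    by (simp add: algebra_simps)
  then show ?thesis by (simp only: exp_plus_2pin)
qed

lemma Omega_shift: "w \<in> Omega_log \<Longrightarrow> w + 2 * pi * \<i> * of_nat j \<in> Omega_log"
  by (simp only: Omega_log_def mem_Collect_eq exp_2piij)

lemma Omega_left:
  assumes "w \<in> Omega_log" "0 \<le> v"
  shows "w - of_real v \<in> Omega_log"
proof -
  have "exp (w - of_real v) = of_real (exp (- v)) * exp w"
    by (simp add: exp_diff exp_minus field_simps exp_of_real)
  moreover have "of_real (exp (- v)) * exp w \<in> Delta"
    using assms by (intro Delta_star) (auto simp: Omega_log_def)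
  ultimately show ?thesis by (simp add: Omega_log_def)
qed

lemma jordan:
  assumes "0 \<le> x" "x \<le> pi/2"
  shows "2 / pi * x \<le> sin x"
proof -
  have cv: "convex_on {0..pi/2} (\<lambda>x. - sin x)"
  proof (rule convex_on_realI[where f'="\<lambda>x. - cos x"])
    show "connected {0..pi/2::real}" by simp
  next
    fix x :: real show "((\<lambda>x. - sin x) has_real_derivative - cos x) (at x)"
      by (auto intro!: derivative_eq_intros)
  next
    fix x y :: real assume "x \<in> {0..pi/2}" "y \<in> {0..pi/2}" "x \<le> y"
    then show "- cos x \<le> - cos y" by (simp add: cos_monotone_0_pi_le)
  qed
  define t where "t = 2 / pi * x"
  have t: "0 \<le> t" "t \<le> 1" using assms pi_gt_zero by (auto simp: t_def field_simps)
  have "- sin ((1 - t) *\<^sub>R 0 + t *\<^sub>R (pi/2)) \<le> (1 - t) * (- sin 0) + t * (- sin (pi/2))"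
    by (rule convex_onD[OF cv t]) auto
  moreover have "t * (pi/2) = x" by (simp add: t_def)
  ultimately show ?thesis by (simp add: t_def)
qed

lemma circle_lower:
  fixes r \<theta> :: real
  assumes r: "1/2 \<le> r" "r < 1" and th: "0 \<le> \<theta>" "\<theta> \<le> 2 * pi"
  shows "((1 - r) + min \<theta> (2 * pi - \<theta>)) / pi \<le> norm (1 - of_real r * exp (\<i> * of_real \<theta>))"
proof -
  define \<phi> where "\<phi> = min \<theta> (2 * pi - \<theta>)"
  have ph: "0 \<le> \<phi>" "\<phi> \<le> pi" using th by (auto simp: \<phi>_def)
  have "sin (\<theta>/2) = sin (\<phi>/2)"
  proof (cases "\<theta> \<le> 2 * pi - \<theta>")
    case False
    then have "\<phi>/2 = pi - \<theta>/2" by (simp add: \<phi>_def)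
    then show ?thesis by (simp only: sin_pi_minus)
  qed (simp add: \<phi>_def)
  moreover have "2 / pi * (\<phi>/2) \<le> sin (\<phi>/2)" using ph by (intro jordan) auto
  ultimately have s: "\<phi> / pi \<le> sin (\<theta>/2)" by simp
  have "0 \<le> \<phi> / pi" using ph by simp
  then have s2: "(\<phi> / pi)^2 \<le> (sin (\<theta>/2))^2" using s by (intro power_mono) auto
  have "1 - cos \<theta> = 2 * (sin (\<theta>/2))^2"
    using cos_double_sin[of "\<theta>/2"] by simp
  have n2: "(norm (1 - of_real r * exp (\<i> * of_real \<theta>)))^2 = (1 - r)^2 + 2 * r * (1 - cos \<theta>)"
  proof -
    have "(norm (1 - of_real r * exp (\<i> * of_real \<theta>)))^2 = (1 - r * cos \<theta>)^2 + (r * sin \<theta>)^2"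
      unfolding cmod_power2 by (simp add: Re_exp Im_exp)
    also have "\<dots> = 1 - 2*r*cos \<theta> + r*r*(cos \<theta> * cos \<theta> + sin \<theta> * sin \<theta>)"
      by algebra
    also have "\<dots> = 1 - 2*r*cos \<theta> + r^2"
      by (simp only: sin_cos_squared_add3) (simp add: power2_eq_square)
    also have "\<dots> = (1 - r)^2 + 2 * r * (1 - cos \<theta>)"
      by (simp add: power2_eq_square algebra_simps)
    finally show ?thesis .
  qed
  have "((1 - r) + \<phi>)^2 / pi^2 \<le> (1 - r)^2 + 2 * (\<phi>/pi)^2"
  proof -
    have "((1 - r) + \<phi>)^2 \<le> 2 * (1-r)^2 + 2 * \<phi>^2"
    proof -
      have "((1 - r) + \<phi>)^2 = 2 * (1-r)^2 + 2 * \<phi>^2 - ((1-r) - \<phi>)^2"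
        by (simp add: power2_eq_square algebra_simps)
      moreover have "0 \<le> ((1-r) - \<phi>)^2" by simp
      ultimately show ?thesis by linarith
    qed
    moreover have "pi^2 \<ge> 2"
    proof -
      have "3*3 \<le> pi*pi" using pi_gt3 by (intro mult_mono) auto
      then show ?thesis by (simp add: power2_eq_square)
    qed
    ultimately have "((1 - r) + \<phi>)^2 / pi^2 \<le> (2 * (1-r)^2 + 2 * \<phi>^2) / pi^2"
      by (intro divide_right_mono) auto
    also have "\<dots> = (1-r)^2 * (2 / pi^2) + 2 * (\<phi>/pi)^2"
      by (simp add: power_divide add_divide_distrib)
    finally have 1: "((1 - r) + \<phi>)^2 / pi^2 \<le> (1-r)^2 * (2 / pi^2) + 2 * (\<phi>/pi)^2" .
    have "2 / pi^2 \<le> 1" using \<open>pi^2 \<ge> 2\<close> by simp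
    then have "(1-r)^2 * (2 / pi^2) \<le> (1-r)^2 * 1"
      by (intro mult_left_mono) auto
    then show ?thesis using 1 by linarith
  qed
  also have "\<dots> \<le> (1 - r)^2 + 2 * r * (1 - cos \<theta>)"
  proof -
    have a: "2*(\<phi>/pi)^2 \<le> 2*(sin(\<theta>/2))^2" using s2 by simp
    have b: "2*(sin(\<theta>/2))^2 \<le> (2*r)*(2*(sin(\<theta>/2))^2)"
      using r by (intro mult_right_mono[of 1 "2*r", simplified]) auto
    have "2 * r * (1 - cos \<theta>) = (2*r)*(2*(sin(\<theta>/2))^2)"
      by (simp only: \<open>1 - cos \<theta> = 2 * (sin (\<theta>/2))^2\<close>)
    then show ?thesis using a b by linarith
  qed
  finally have "(((1 - r) + \<phi>) / pi)^2 \<le> (norm (1 - of_real r * exp (\<i> * of_real \<theta>)))^2"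
    using n2 by (simp add: power_divide)
  then show ?thesis unfolding \<phi>_def[symmetric]
    by (rule power2_le_imp_le) simp
qed

lemma powr_integral_a:
  fixes \<delta> \<beta> :: real assumes d: "\<delta> > 0" and b: "\<beta> > 1"
  shows "((\<lambda>x. (\<delta> + 2*pi*x) powr (-\<beta>)) has_integral
          ((\<delta> powr (1-\<beta>) - (\<delta> + 2*pi) powr (1-\<beta>)) / (2*pi*(\<beta>-1)))) {0..1}"
proof -
  define F where "F x = - ((\<delta> + 2*pi*x) powr (1-\<beta>)) / (2*pi*(\<beta>-1))" for x
  have "((\<lambda>x. (\<delta> + 2*pi*x) powr (-\<beta>)) has_integral (F 1 - F 0)) {0..1}"
  proof (rule fundamental_theorem_of_calculus)
    fix x :: real assume x: "x \<in> {0..1}"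
    have "0 \<le> 2*pi*x" using x by simp
    then have pos: "\<delta> + 2*pi*x > 0" using d by linarith
    have d1: "((\<lambda>x. \<delta> + 2*pi*x) has_real_derivative 2*pi) (at x)"
      by (auto intro!: derivative_eq_intros)
    have d2: "((\<lambda>x. (\<delta> + 2*pi*x) powr (1-\<beta>)) has_real_derivative
               ((1-\<beta>) * (\<delta> + 2*pi*x) powr (1-\<beta>-1)) * (2*pi)) (at x)"
      using DERIV_chain2[OF has_real_derivative_powr[OF pos] d1] .
    have d3: "(F has_real_derivative - (((1-\<beta>) * (\<delta> + 2*pi*x) powr (1-\<beta>-1)) * (2*pi)) / (2*pi*(\<beta>-1))) (at x)"
      unfolding F_def by (intro DERIV_cdivide DERIV_minus d2)
    have "- (((1-\<beta>) * (\<delta> + 2*pi*x) powr (1-\<beta>-1)) * (2*pi)) / (2*pi*(\<beta>-1)) = (\<delta> + 2*pi*x) powr (-\<beta>)"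
      using b by (simp add: field_simps)
    with d3 have "(F has_real_derivative (\<delta> + 2*pi*x) powr (-\<beta>)) (at x)" by simp
    then show "(F has_vector_derivative (\<delta> + 2*pi*x) powr (-\<beta>)) (at x within {0..1})"
      by (simp add: has_real_derivative_iff_has_vector_derivative[symmetric] has_field_derivative_at_within)
  qed simp
  moreover have "F 1 - F 0 = (\<delta> powr (1-\<beta>) - (\<delta> + 2*pi) powr (1-\<beta>)) / (2*pi*(\<beta>-1))"
    by (simp add: F_def diff_divide_distrib)
  ultimately show ?thesis by simp
qed

lemma powr_integral_b:
  fixes \<delta> \<beta> :: real assumes d: "\<delta> > 0" and b: "\<beta> > 1"
  shows "((\<lambda>x. (\<delta> + 2*pi*(1-x)) powr (-\<beta>)) has_integral
          ((\<delta> powr (1-\<beta>) - (\<delta> + 2*pi) powr (1-\<beta>)) / (2*pi*(\<beta>-1)))) {0..1}"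
proof -
  define F where "F x = ((\<delta> + 2*pi*(1-x)) powr (1-\<beta>)) / (2*pi*(\<beta>-1))" for x
  have "((\<lambda>x. (\<delta> + 2*pi*(1-x)) powr (-\<beta>)) has_integral (F 1 - F 0)) {0..1}"
  proof (rule fundamental_theorem_of_calculus)
    fix x :: real assume x: "x \<in> {0..1}"
    have "0 \<le> 2*pi*(1-x)" using x by simp
    then have pos: "\<delta> + 2*pi*(1-x) > 0" using d by linarith
    have d1: "((\<lambda>x. \<delta> + 2*pi*(1-x)) has_real_derivative -(2*pi)) (at x)"
      by (auto intro!: derivative_eq_intros)
    have d2: "((\<lambda>x. (\<delta> + 2*pi*(1-x)) powr (1-\<beta>)) has_real_derivative
               ((1-\<beta>) * (\<delta> + 2*pi*(1-x)) powr (1-\<beta>-1)) * (-(2*pi))) (at x)"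
      using DERIV_chain2[OF has_real_derivative_powr[OF pos] d1] .
    have d3: "(F has_real_derivative (((1-\<beta>) * (\<delta> + 2*pi*(1-x)) powr (1-\<beta>-1)) * (-(2*pi))) / (2*pi*(\<beta>-1))) (at x)"
      unfolding F_def by (intro DERIV_cdivide d2)
    have "(((1-\<beta>) * (\<delta> + 2*pi*(1-x)) powr (1-\<beta>-1)) * (-(2*pi))) / (2*pi*(\<beta>-1)) = (\<delta> + 2*pi*(1-x)) powr (-\<beta>)"
      using b by (simp add: field_simps)
    with d3 have "(F has_real_derivative (\<delta> + 2*pi*(1-x)) powr (-\<beta>)) (at x)" by simp
    then show "(F has_vector_derivative (\<delta> + 2*pi*(1-x)) powr (-\<beta>)) (at x within {0..1})"
      by (simp add: has_real_derivative_iff_has_vector_derivative[symmetric] has_field_derivative_at_within)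
  qed simp
  moreover have "F 1 - F 0 = (\<delta> powr (1-\<beta>) - (\<delta> + 2*pi) powr (1-\<beta>)) / (2*pi*(\<beta>-1))"
    by (simp add: F_def diff_divide_distrib)
  ultimately show ?thesis by simp
qed


lemma min_powr_le:
  fixes \<delta> \<beta> a b :: real assumes "\<delta> > 0" "a \<ge> 0" "b \<ge> 0"
  shows "(\<delta> + min a b) powr (-\<beta>) \<le> (\<delta> + a) powr (-\<beta>) + (\<delta> + b) powr (-\<beta>)"
proof (cases "a \<le> b")
  case True then have "min a b = a" by simp
  then show ?thesis by simp
next
  case False then have "min a b = b" by simp
  then show ?thesis by simp
qed

lemma cauchy_circle_bound:
  fixes H :: "complex \<Rightarrow> complex"
  assumes holo: "H holomorphic_on ball 0 1"
    and bnd: "\<And>t. 1/2 \<le> norm t \<Longrightarrow> norm t < 1 \<Longrightarrow> norm (H t) \<le> M * norm (1 - t) powr (-\<beta>)"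
    and b: "\<beta> > 1" and M: "M \<ge> 0"
    and r: "1/2 \<le> r" "r < 1"
  shows "norm ((deriv ^^ j) H 0 / fact j) \<le> (1/r)^j * M * pi powr \<beta> * (1-r) powr (1-\<beta>) / (pi * (\<beta> - 1))"
proof -
  define \<delta> where "\<delta> = 1 - r"
  have dpos: "\<delta> > 0" using r by (simp add: \<delta>_def)
  have rpos: "r > 0" using r by simp
  have sub: "cball 0 r \<subseteq> ball (0::complex) 1" using r by auto
  have cont: "continuous_on (cball 0 r) H"
    using holomorphic_on_imp_continuous_on[OF holo] sub continuous_on_subset by blast
  have holr: "H holomorphic_on ball 0 r"
    using holo sub ball_subset_cball holomorphic_on_subset by blast
  define I where "I = 2 * pi * \<i> / fact j * (deriv ^^ j) H 0"
  have "((\<lambda>u. H u / (u - 0) ^ Suc j) has_contour_integral I) (circlepath 0 r)"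
    unfolding I_def using rpos by (intro Cauchy_has_contour_integral_higher_derivative_circlepath[OF cont holr]) auto
  then have fi: "((\<lambda>x. H (circlepath 0 r x) / (circlepath 0 r x - 0) ^ Suc j * vector_derivative (circlepath 0 r) (at x within {0..1})) has_integral I) {0..1}"
    unfolding has_contour_integral_def by simp
  define f where "f = (\<lambda>x. H (circlepath 0 r x) / (circlepath 0 r x - 0) ^ Suc j * vector_derivative (circlepath 0 r) (at x within {0..1}))"
  have fi': "(f has_integral I) {0..1}" unfolding f_def by (rule fi)
  define V where "V = (\<delta> powr (1-\<beta>) - (\<delta> + 2*pi) powr (1-\<beta>)) / (2*pi*(\<beta>-1))"
  define C0 where "C0 = 2*pi*(1/r)^j*M*pi powr \<beta>"
  define g where "g x = C0 * ((\<delta> + 2*pi*x) powr (-\<beta>) + (\<delta> + 2*pi*(1-x)) powr (-\<beta>))" for x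
  have gi: "(g has_integral C0 * (V + V)) {0..1}"
    unfolding g_def V_def
    by (intro has_integral_mult_right has_integral_add powr_integral_a powr_integral_b dpos b)
  have fint: "f integrable_on {0..1}" using fi' by blast
  have gint: "g integrable_on {0..1}" using gi by blast
  have pw: "norm (f x) \<le> g x" if x: "x \<in> {0..1}" for x
  proof -
    define \<theta> where "\<theta> = 2 * pi * x"
    have th: "0 \<le> \<theta>" "\<theta> \<le> 2 * pi" using x by (auto simp: \<theta>_def)
    have cp: "circlepath 0 r x = of_real r * exp (\<i> * of_real \<theta>)"
      by (simp add: circlepath \<theta>_def algebra_simps)
    have ncp: "norm (circlepath 0 r x) = r" using rpos by (simp add: cp norm_mult)
    have vd: "norm (vector_derivative (circlepath 0 r) (at x within {0..1})) = 2 * pi * r"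
      using x rpos by (simp add: vector_derivative_circlepath01 norm_mult)
    have nf: "norm (f x) = norm (H (circlepath 0 r x)) / r ^ Suc j * (2 * pi * r)"
      unfolding f_def by (simp add: norm_mult norm_divide norm_power ncp vd)
    also have "\<dots> = 2 * pi * (1/r)^j * norm (H (circlepath 0 r x))"
      using rpos by (simp add: field_simps)
    finally have nf: "norm (f x) = 2 * pi * (1/r)^j * norm (H (circlepath 0 r x))" .
    have hb: "norm (H (circlepath 0 r x)) \<le> M * norm (1 - circlepath 0 r x) powr (-\<beta>)"
      using bnd[of "circlepath 0 r x"] ncp r by simp
    define \<phi> where "\<phi> = min \<theta> (2 * pi - \<theta>)"
    have ph: "0 \<le> \<phi>" using th by (simp add: \<phi>_def)
    have low: "(\<delta> + \<phi>) / pi \<le> norm (1 - circlepath 0 r x)"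
      using circle_lower[OF r th] unfolding cp \<phi>_def \<delta>_def by simp
    have lpos: "(\<delta> + \<phi>) / pi > 0" using dpos ph by simp
    have "norm (1 - circlepath 0 r x) powr (-\<beta>) \<le> ((\<delta> + \<phi>) / pi) powr (-\<beta>)"
      using b by (intro powr_mono2'[OF _ lpos low]) simp
    also have "\<dots> = pi powr \<beta> * (\<delta> + \<phi>) powr (-\<beta>)"
      using dpos ph by (subst powr_divide) (auto simp: powr_minus field_simps)
    also have "(\<delta> + \<phi>) powr (-\<beta>) \<le> (\<delta> + \<theta>) powr (-\<beta>) + (\<delta> + (2*pi - \<theta>)) powr (-\<beta>)"
      unfolding \<phi>_def using dpos th by (intro min_powr_le) auto
    finally have "norm (1 - circlepath 0 r x) powr (-\<beta>) \<le> pi powr \<beta> * ((\<delta> + \<theta>) powr (-\<beta>) + (\<delta> + (2*pi - \<theta>)) powr (-\<beta>))"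
      by simp
    moreover have "2*pi - \<theta> = 2*pi*(1-x)" by (simp add: \<theta>_def algebra_simps)
    ultimately have "norm (1 - circlepath 0 r x) powr (-\<beta>) \<le> pi powr \<beta> * ((\<delta> + 2*pi*x) powr (-\<beta>) + (\<delta> + 2*pi*(1-x)) powr (-\<beta>))"
      by (simp add: \<theta>_def)
    then have "norm (H (circlepath 0 r x)) \<le> M * (pi powr \<beta> * ((\<delta> + 2*pi*x) powr (-\<beta>) + (\<delta> + 2*pi*(1-x)) powr (-\<beta>)))"
      using hb M by (meson mult_left_mono order_trans)
    then have "2 * pi * (1/r)^j * norm (H (circlepath 0 r x)) \<le> 2 * pi * (1/r)^j * (M * (pi powr \<beta> * ((\<delta> + 2*pi*x) powr (-\<beta>) + (\<delta> + 2*pi*(1-x)) powr (-\<beta>))))"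
      using rpos by (intro mult_left_mono) auto
    then show ?thesis unfolding nf g_def C0_def by (simp add: algebra_simps)
  qed
  have "norm (integral {0..1} f) \<le> integral {0..1} g"
    by (rule integral_norm_bound_integral[OF fint gint pw])
  moreover have "integral {0..1} f = I" using fi' by (simp add: integral_unique)
  moreover have "integral {0..1} g = C0 * (V + V)" using gi by (simp add: integral_unique)
  ultimately have nI: "norm I \<le> C0 * (V + V)" by simp
  have "V \<le> \<delta> powr (1-\<beta>) / (2*pi*(\<beta>-1))"
    unfolding V_def using b by (intro divide_right_mono) auto
  moreover have "C0 \<ge> 0" unfolding C0_def using M rpos by simp
  ultimately have "C0 * (V + V) \<le> C0 * (2 * (\<delta> powr (1-\<beta>) / (2*pi*(\<beta>-1))))"
    by (intro mult_left_mono) linarith+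
  with nI have nI2: "norm I \<le> C0 * (2 * (\<delta> powr (1-\<beta>) / (2*pi*(\<beta>-1))))" by linarith
  have "(deriv ^^ j) H 0 / fact j = I / (2 * pi * \<i>)"
    unfolding I_def by (simp add: field_simps)
  then have "norm ((deriv ^^ j) H 0 / fact j) = norm I / (2 * pi)"
    by (simp add: norm_divide norm_mult)
  also have "\<dots> \<le> C0 * (2 * (\<delta> powr (1-\<beta>) / (2*pi*(\<beta>-1)))) / (2 * pi)"
    using nI2 by (intro divide_right_mono) auto
  also have "\<dots> = (1/r)^j * M * pi powr \<beta> * (1-r) powr (1-\<beta>) / (pi * (\<beta> - 1))"
  proof -
    have "\<beta> - 1 \<noteq> 0" "r \<noteq> 0" using b rpos by auto
    then show ?thesis unfolding C0_def \<delta>_def by (simp add: field_simps)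
  qed
  finally show ?thesis .
qed


lemma coeff_deriv:
  fixes H :: "complex \<Rightarrow> complex" and c :: "nat \<Rightarrow> complex"
  assumes ser: "\<And>t. t \<in> ball 0 1 \<Longrightarrow> (\<lambda>j. c j * t^j) sums H t"
  shows "c j = (deriv ^^ j) H 0 / fact j"
proof -
  define P where "P = Abs_fps c"
  have "summable (\<lambda>n. c n * (1/2 :: complex) ^ n)"
    using ser[of "1/2"] by (auto simp: sums_iff)
  then have "ereal (norm (1/2 :: complex)) \<le> conv_radius c" by (rule conv_radius_geI)
  then have "fps_conv_radius P > 0" unfolding fps_conv_radius_def P_def
    by (simp add: order_less_le_trans[rotated])
  moreover have "eventually (\<lambda>z. eval_fps P z = H z) (nhds 0)"
    unfolding eventually_nhds
  proof (intro exI conjI ballI)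
    show "open (ball (0::complex) 1)" "(0::complex) \<in> ball 0 1" by auto
    fix z :: complex assume "z \<in> ball 0 1"
    then show "eval_fps P z = H z"
      using ser[of z] unfolding eval_fps_def P_def by (simp add: sums_iff)
  qed
  ultimately have "H has_fps_expansion P" unfolding has_fps_expansion_def by simp
  from fps_nth_fps_expansion[OF this, of j] show ?thesis by (simp add: P_def)
qed

lemma coeff_bound:
  fixes H :: "complex \<Rightarrow> complex" and c :: "nat \<Rightarrow> complex"
  assumes holo: "H holomorphic_on ball 0 1"
    and ser: "\<And>t. t \<in> ball 0 1 \<Longrightarrow> (\<lambda>j. c j * t^j) sums H t"
    and bnd: "\<And>t. 1/2 \<le> norm t \<Longrightarrow> norm t < 1 \<Longrightarrow> norm (H t) \<le> M * norm (1 - t) powr (-\<beta>)"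
    and b: "\<beta> > 1" and M: "M \<ge> 0"
  shows "norm (c j) \<le> 3 * M * pi powr \<beta> / (pi * (\<beta> - 1)) * (real j + 2) powr (\<beta> - 1)"
proof -
  define r where "r = 1 - 1 / (real j + 2)"
  have r: "1/2 \<le> r" "r < 1" by (auto simp: r_def field_simps)
  have "norm (c j) \<le> (1/r)^j * M * pi powr \<beta> * (1-r) powr (1-\<beta>) / (pi * (\<beta> - 1))"
    using cauchy_circle_bound[OF holo bnd b M r, of j] coeff_deriv[OF ser, of j] by simp
  also have "(1-r) powr (1-\<beta>) = (real j + 2) powr (\<beta> - 1)"
  proof -
    have "(1-r) powr (1-\<beta>) = (1 / (real j + 2)) powr (1-\<beta>)" by (simp add: r_def)
    also have "\<dots> = (real j + 2) powr (\<beta> - 1)"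
      by (simp add: powr_divide powr_minus_divide[symmetric] powr_minus)
    finally show ?thesis .
  qed
  also have "(1/r)^j \<le> 3"
  proof -
    have "1/r = 1 + 1 / (real j + 1)" by (simp add: r_def field_simps)
    also have "\<dots> \<le> exp (1 / (real j + 1))" by (rule exp_ge_add_one_self)
    finally have "(1/r)^j \<le> exp (1 / (real j + 1)) ^ j"
      using r by (intro power_mono) auto
    also have "\<dots> = exp (real j / (real j + 1))"
      by (simp add: exp_of_nat_mult[symmetric])
    also have "\<dots> \<le> exp 1" by simp
    also have "\<dots> \<le> 3" by (rule exp_le)
    finally show ?thesis .
  qed
  then have "(1/r)^j * M * pi powr \<beta> * (real j + 2) powr (\<beta> - 1) / (pi * (\<beta> - 1))
      \<le> 3 * M * pi powr \<beta> * (real j + 2) powr (\<beta> - 1) / (pi * (\<beta> - 1))"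
    using M b by (intro divide_right_mono mult_right_mono) auto
  finally show ?thesis by (simp add: field_simps)
qed

lemma nat_mod_eq_int_dvd: "(a::nat) mod m = b mod m \<longleftrightarrow> int m dvd (int a - int b)"
proof -
  have "a mod m = b mod m \<longleftrightarrow> int (a mod m) = int (b mod m)" by simp
  also have "\<dots> \<longleftrightarrow> int a mod int m = int b mod int m" by (simp add: zmod_int)
  also have "\<dots> \<longleftrightarrow> int m dvd (int a - int b)" by (rule mod_eq_dvd_iff)
  finally show ?thesis .
qed

lemma rou_sum:
  fixes m l n :: nat assumes m: "m \<ge> 1"
  shows "(\<Sum>j<m. exp (- (2*pi*\<i>* of_nat j* of_nat l/of_nat m)) * exp (of_real (real (Suc n)/real m - 1) * (2*pi*\<i>* of_nat j)))
         = (if Suc n mod m = l mod m then of_nat m else 0)"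
proof -
  define \<theta> where "\<theta> = (real (Suc n) - real l)/real m - 1"
  define z where "z = exp (2*pi*\<i>* of_real \<theta>)"
  have mnz: "(of_nat m :: complex) \<noteq> 0" "real m \<noteq> 0" using m by auto
  have trm: "exp (- (2*pi*\<i>* of_nat j* of_nat l/of_nat m)) * exp (of_real (real (Suc n)/real m - 1) * (2*pi*\<i>* of_nat j)) = z^j" for j
  proof -
    have "z^j = exp (of_nat j * (2*pi*\<i>* of_real \<theta>))" by (simp add: z_def exp_of_nat_mult)
    also have "of_nat j * (2*pi*\<i>* of_real \<theta>) = - (2*pi*\<i>* of_nat j* of_nat l/of_nat m) + of_real (real (Suc n)/real m - 1) * (2*pi*\<i>* of_nat j)"
      using mnz by (simp add: \<theta>_def field_simps)
    finally show ?thesis by (simp only: exp_add)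
  qed
  have zm: "z^m = 1"
  proof -
    have "z^m = exp (of_nat m * (2*pi*\<i>* of_real \<theta>))" by (simp add: z_def exp_of_nat_mult)
    also have "\<dots> = 1"
    proof (subst exp_eq_1, intro conjI exI)
      show "Re (of_nat m * (2*pi*\<i>* of_real \<theta>)) = 0" by simp
      show "Im (of_nat m * (2*pi*\<i>* of_real \<theta>)) = of_int (2 * (int (Suc n) - int l - int m)) * pi"
        using mnz by (simp add: \<theta>_def field_simps)
    qed
    finally show ?thesis .
  qed
  have z1: "z = 1 \<longleftrightarrow> Suc n mod m = l mod m"
  proof
    assume "z = 1"
    then obtain k :: int where k: "Im (2*pi*\<i>* of_real \<theta>) = of_int (2*k) * pi"
      unfolding z_def exp_eq_1 by blast
    then have "\<theta> = of_int k" by simp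
    then have "real (Suc n) - real l = real m * (of_int k + 1)"
      using mnz by (simp add: \<theta>_def field_simps)
    then have "real_of_int (int (Suc n) - int l) = real_of_int (int m * (k + 1))" by simp
    then have "int (Suc n) - int l = int m * (k + 1)" by (simp only: of_int_eq_iff)
    then have "int m dvd (int (Suc n) - int l)" by simp
    then show "Suc n mod m = l mod m" by (simp only: nat_mod_eq_int_dvd)
  next
    assume "Suc n mod m = l mod m"
    then have "int m dvd (int (Suc n) - int l)" by (simp only: nat_mod_eq_int_dvd)
    then obtain q where q: "int (Suc n) - int l = int m * q" by (auto elim: dvdE)
    then have "real_of_int (int (Suc n) - int l) = real_of_int (int m * q)" by simp
    then have "real (Suc n) - real l = real m * of_int q" by simp
    then have "\<theta> = of_int (q - 1)" using mnz by (simp add: \<theta>_def field_simps)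
    then show "z = 1" unfolding z_def exp_eq_1 
      by (intro conjI exI[of _ "q - 1"]) simp_all
  qed
  have "(\<Sum>j<m. exp (- (2*pi*\<i>* of_nat j* of_nat l/of_nat m)) * exp (of_real (real (Suc n)/real m - 1) * (2*pi*\<i>* of_nat j)))
        = (\<Sum>j<m. z^j)" by (simp only: trm)
  also have "\<dots> = (if z = 1 then of_nat m else (1 - z^m) / (1 - z))" by (rule sum_gp_strict)
  also have "\<dots> = (if Suc n mod m = l mod m then of_nat m else 0)"
    using zm z1 by simp
  finally show ?thesis .
qed


locale Gset =
  fixes m l :: nat and a :: "nat \<Rightarrow> complex" and F G :: "complex \<Rightarrow> complex" and A B :: real
  assumes m: "m \<ge> 1" and l: "1 \<le> l" "l \<le> m"
    and F_holo: "F holomorphic_on Omega_log"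
    and F_borel: "\<exists>\<rho>>0. \<forall>w\<in>Omega_log. norm (exp w) < \<rho> \<longrightarrow>
        (\<lambda>n. a (Suc n) * exp (of_real (real (Suc n) / real m - 1) * w)
                / of_real (Gamma (real (Suc n) / real m))) sums F w"
    and F_bound: "\<And>w. w \<in> Omega_log \<Longrightarrow>
        norm (F w) * exp ((real m - 1) / real m * Re w) \<le> A * exp (B * norm (exp w))"
    and G_holo: "G holomorphic_on Delta"
    and G_germ: "\<exists>\<rho>>0. \<forall>\<xi>. 0 < norm \<xi> \<and> norm \<xi> < \<rho> \<longrightarrow>
        summable (\<lambda>k. a (l + m * k) * \<xi> ^ k / of_real (Gamma (real l / real m + real k))) \<and>
        G \<xi> = (\<xi> / (1 - exp (- \<xi>))) powr of_real (real l / real m - 1)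
          * (\<Sum>k. a (l + m * k) * \<xi> ^ k / of_real (Gamma (real l / real m + real k)))"
begin

definition Phi :: "complex \<Rightarrow> complex" where
  "Phi w = (\<Sum>j<m. exp (- (2*pi*\<i>* of_nat j* of_nat l/ of_nat m)) * F (w + 2 * pi * \<i> * of_nat j)) / of_nat m"

definition q :: "complex \<Rightarrow> complex" where
  "q \<xi> = \<xi> / (1 - exp (- \<xi>))"

definition H1 :: "complex \<Rightarrow> complex" where
  "H1 w = G (exp w) ^ m * q (exp w) ^ (m - l)"

definition H2 :: "complex \<Rightarrow> complex" where
  "H2 w = exp (of_nat (m - l) * w) * Phi w ^ m"

lemma exp_Omega: "w \<in> Omega_log \<Longrightarrow> exp w \<in> Delta" "w \<in> Omega_log \<Longrightarrow> exp w \<noteq> 0"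
  by (auto simp: Omega_log_def)

lemma Phi_holo: "Phi holomorphic_on Omega_log"
proof -
  have "(\<lambda>w. F (w + 2 * pi * \<i> * of_nat j)) holomorphic_on Omega_log" for j
  proof -
    have "(F \<circ> (\<lambda>w. w + 2 * pi * \<i> * of_nat j)) holomorphic_on Omega_log"
    proof (rule holomorphic_on_compose_gen[OF _ F_holo])
      show "(\<lambda>w. w + 2 * pi * \<i> * of_nat j) ` Omega_log \<subseteq> Omega_log" using Omega_shift by blast
    qed (auto intro!: holomorphic_intros)
    then show ?thesis by (simp add: o_def)
  qed
  then show ?thesis unfolding Phi_def[abs_def] by (intro holomorphic_intros) auto
qed

lemma H1_holo: "H1 holomorphic_on Omega_log"
proof -
  have "(G \<circ> exp) holomorphic_on Omega_log"
    by (rule holomorphic_on_compose_gen[OF _ G_holo]) (auto intro!: holomorphic_intros simp: exp_Omega)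
  then have g: "(\<lambda>w. G (exp w)) holomorphic_on Omega_log" by (simp add: o_def)
  have "(\<lambda>w. exp w / (1 - exp (- exp w))) holomorphic_on Omega_log"
  proof (intro holomorphic_intros)
    fix w assume "w \<in> Omega_log"
    then show "1 - exp (- exp w) \<noteq> 0" using Delta_exp_ne1 exp_Omega by force
  qed
  then have "(\<lambda>w. q (exp w)) holomorphic_on Omega_log" by (simp add: q_def)
  then show ?thesis unfolding H1_def[abs_def] using g by (intro holomorphic_intros) auto
qed

lemma H2_holo: "H2 holomorphic_on Omega_log"
  unfolding H2_def[abs_def] using Phi_holo by (intro holomorphic_intros) auto


lemma qP_cancel:
  fixes Q :: complex
  assumes "Q \<noteq> 0"
  shows "(Q powr of_real (real l / real m - 1)) ^ m * Q ^ (m - l) = 1"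
proof -
  have mnz: "real m \<noteq> 0" using m by auto
  have "(Q powr of_real (real l / real m - 1)) ^ m = exp (of_nat m * (of_real (real l / real m - 1) * Ln Q))"
    using assms by (simp add: powr_def exp_of_nat_mult)
  moreover have "Q ^ (m - l) = exp (of_nat (m - l) * Ln Q)"
    using assms by (simp add: exp_of_nat_mult)
  moreover have "of_nat m * (of_real (real l / real m - 1) * Ln Q) + of_nat (m - l) * Ln Q = 0"
  proof -
    have "of_nat m * (of_real (real l / real m - 1) :: complex) = of_nat l - of_nat m"
      using mnz by (simp add: field_simps)
    moreover have "(of_nat (m - l) :: complex) = of_nat m - of_nat l" using l by (simp add: of_nat_diff)
    ultimately have h: "of_nat m * (of_real (real l / real m - 1) :: complex) + of_nat (m - l) = 0" by simp
    have "of_nat m * (of_real (real l / real m - 1) * (Ln Q)) + of_nat (m - l) * (Ln Q) = (of_nat m * (of_real (real l / real m - 1) :: complex) + of_nat (m - l)) * (Ln Q)"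
      by (simp only: distrib_right mult.assoc)
    then show ?thesis using h by simp
  qed
  ultimately show ?thesis by (simp add: exp_add[symmetric])
qed

lemma E_cancel:
  fixes w :: complex
  shows "exp (of_nat (m - l) * w) * exp (of_real (real l / real m - 1) * w) ^ m = 1"
proof -
  have mnz: "real m \<noteq> 0" using m by auto
  have "exp (of_real (real l / real m - 1) * w) ^ m = exp (of_nat m * (of_real (real l / real m - 1) * w))"
    by (rule exp_of_nat_mult[symmetric])
  moreover have "of_nat m * (of_real (real l / real m - 1) * w) + of_nat (m - l) * w = 0"
  proof -
    have "of_nat m * (of_real (real l / real m - 1) :: complex) = of_nat l - of_nat m"
      using mnz by (simp add: field_simps)
    moreover have "(of_nat (m - l) :: complex) = of_nat m - of_nat l" using l by (simp add: of_nat_diff)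
    ultimately have h: "of_nat m * (of_real (real l / real m - 1) :: complex) + of_nat (m - l) = 0" by simp
    have "of_nat m * (of_real (real l / real m - 1) * (w)) + of_nat (m - l) * (w) = (of_nat m * (of_real (real l / real m - 1) :: complex) + of_nat (m - l)) * (w)"
      by (simp only: distrib_right mult.assoc)
    then show ?thesis using h by simp
  qed
  ultimately show ?thesis by (simp add: exp_add[symmetric] add.commute)
qed

lemma near_zero:
  obtains \<rho> where "\<rho> > 0" "\<And>w. Re w < ln \<rho> \<Longrightarrow> w \<in> Omega_log" "\<And>w. Re w < ln \<rho> \<Longrightarrow> H1 w = H2 w"
proof -
  obtain \<rho>1 where \<rho>1: "\<rho>1 > 0" "\<forall>w\<in>Omega_log. norm (exp w) < \<rho>1 \<longrightarrow>
        (\<lambda>n. a (Suc n) * exp (of_real (real (Suc n) / real m - 1) * w)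
                / of_real (Gamma (real (Suc n) / real m))) sums F w" using F_borel by blast
  obtain \<rho>2 where \<rho>2: "\<rho>2 > 0" "\<forall>\<xi>. 0 < norm \<xi> \<and> norm \<xi> < \<rho>2 \<longrightarrow>
        summable (\<lambda>k. a (l + m * k) * \<xi> ^ k / of_real (Gamma (real l / real m + real k))) \<and>
        G \<xi> = (\<xi> / (1 - exp (- \<xi>))) powr of_real (real l / real m - 1)
          * (\<Sum>k. a (l + m * k) * \<xi> ^ k / of_real (Gamma (real l / real m + real k)))"
    using G_germ by blast
  obtain \<epsilon> where \<epsilon>: "\<epsilon> > 0" "ball 0 \<epsilon> \<subseteq> Delta"
    using open_Delta zero_in_Delta open_contains_ball by blast
  define \<rho> where "\<rho> = min (min \<rho>1 \<rho>2) \<epsilon>"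
  have \<rho>pos: "\<rho> > 0" using \<rho>1 \<rho>2 \<epsilon> by (simp add: \<rho>_def)
  have nrm: "norm (exp w) < \<rho>" if "Re w < ln \<rho>" for w
  proof -
    have "norm (exp w) = exp (Re w)" by simp
    also have "\<dots> < exp (ln \<rho>)" using that by simp
    also have "\<dots> = \<rho>" using \<rho>pos by simp
    finally show ?thesis .
  qed
  have inO: "w \<in> Omega_log" if "Re w < ln \<rho>" for w
  proof -
    have "exp w \<in> ball 0 \<epsilon>" using nrm[OF that] by (simp add: \<rho>_def)
    then show ?thesis using \<epsilon> by (auto simp: Omega_log_def)
  qed
  have eq: "H1 w = H2 w" if w: "Re w < ln \<rho>" for w
  proof -
    define \<xi> where "\<xi> = exp w"
    have n\<xi>: "norm \<xi> < \<rho>" "\<xi> \<noteq> 0" using nrm[OF w] by (auto simp: \<xi>_def)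
    have wO: "w \<in> Omega_log" by (rule inO[OF w])
    define T where "T n = a (Suc n) * exp (of_real (real (Suc n) / real m - 1) * w) / of_real (Gamma (real (Suc n) / real m))" for n
    define \<omega> where "\<omega> j n = exp (of_real (real (Suc n) / real m - 1) * (2*pi*\<i>* of_nat j))" for j n
    define e where "e j = exp (- (2*pi*\<i>* of_nat j* of_nat l/ of_nat m))" for j
    have Fj: "(\<lambda>n. T n * \<omega> j n) sums F (w + 2*pi*\<i>* of_nat j)" for j
    proof -
      have O: "w + 2*pi*\<i>* of_nat j \<in> Omega_log" by (rule Omega_shift[OF wO])
      have "norm (exp (w + 2*pi*\<i>* of_nat j)) < \<rho>1" using exp_2piij[of w j] n\<xi> 
        by (simp add: \<rho>_def \<xi>_def)
      then have "(\<lambda>n. a (Suc n) * exp (of_real (real (Suc n) / real m - 1) * (w + 2*pi*\<i>* of_nat j)) / of_real (Gamma (real (Suc n) / real m))) sums F (w + 2*pi*\<i>* of_nat j)"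
        using \<rho>1(2) O by blast
      moreover have "a (Suc n) * exp (of_real (real (Suc n) / real m - 1) * (w + 2*pi*\<i>* of_nat j)) / of_real (Gamma (real (Suc n) / real m)) = T n * \<omega> j n" for n
        by (simp add: T_def \<omega>_def distrib_left exp_add)
      ultimately show ?thesis by simp
    qed
    have "(\<lambda>n. \<Sum>j<m. e j * (T n * \<omega> j n)) sums (\<Sum>j<m. e j * F (w + 2*pi*\<i>* of_nat j))"
      by (intro sums_sum sums_mult Fj)
    from sums_divide[OF this, of "of_nat m"]
    have s1: "(\<lambda>n. (\<Sum>j<m. e j * (T n * \<omega> j n)) / of_nat m) sums Phi w"
      by (simp add: Phi_def e_def)
    have s2: "(\<Sum>j<m. e j * (T n * \<omega> j n)) / of_nat m = T n * (if Suc n mod m = l mod m then 1 else 0)" for n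
    proof -
      have "(\<Sum>j<m. e j * (T n * \<omega> j n)) = T n * (\<Sum>j<m. e j * \<omega> j n)"
        by (simp add: sum_distrib_left algebra_simps)
      also have "(\<Sum>j<m. e j * \<omega> j n) = (if Suc n mod m = l mod m then of_nat m else 0)"
        unfolding e_def \<omega>_def by (rule rou_sum[OF m])
      finally show ?thesis using m by auto
    qed
    have Ps: "(\<lambda>n. T n * (if Suc n mod m = l mod m then 1 else 0)) sums Phi w"
      using s1 unfolding s2 .
    define g where "g k = l - 1 + m * k" for k
    have sm: "strict_mono g" using m by (auto simp: strict_mono_def g_def)
    have Sg: "Suc (g k) = l + m * k" for k using l by (simp add: g_def)
    have rng: "n \<in> range g" if "Suc n mod m = l mod m" for n
    proof (cases "l \<le> Suc n")
      case True
      then have "m dvd (Suc n - l)" using that mod_eq_dvd_iff_nat[OF True] by simp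
      then obtain k where k: "Suc n - l = m * k" by (auto elim: dvdE)
      then have "n = g k" using True l by (simp add: g_def)
      then show ?thesis by blast
    next
      case False
      then have "Suc n < m" using l by simp
      then have "Suc n mod m = Suc n" by simp
      moreover have "l mod m = (if l = m then 0 else l)" using l by auto
      ultimately have False using that False by (auto split: if_splits)
      then show ?thesis ..
    qed
    have z: "T n * (if Suc n mod m = l mod m then 1 else 0) = 0" if "n \<notin> range g" for n
      using rng that by auto
    have "(\<lambda>k. T (g k) * (if Suc (g k) mod m = l mod m then 1 else 0)) sums Phi w"
      using sums_mono_reindex[OF sm, of "\<lambda>n. T n * (if Suc n mod m = l mod m then 1 else 0)"] z Ps by blast
    then have Tg: "(\<lambda>k. T (g k)) sums Phi w" by (simp add: Sg)
    define E where "E = exp (of_real (real l / real m - 1) * w)"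
    define X where "X k = a (l + m * k) * \<xi> ^ k / of_real (Gamma (real l / real m + real k))" for k
    have TgE: "T (g k) = E * X k" for k
    proof -
      have r: "real (Suc (g k)) / real m = real l / real m + real k"
        using m by (simp add: Sg field_simps)
      have ex: "exp (of_real (real l / real m + real k - 1) * w) = E * \<xi> ^ k"
      proof -
        have "of_real (real l / real m + real k - 1) * w = of_real (real l / real m - 1) * w + of_nat k * w"
          by (simp add: algebra_simps)
        then show ?thesis by (simp add: E_def \<xi>_def exp_add exp_of_nat_mult)
      qed
      show ?thesis unfolding T_def r using ex by (simp add: X_def Sg)
    qed
    have ES: "(\<lambda>k. E * X k) sums Phi w" using Tg unfolding TgE .
    have n\<xi>2: "0 < norm \<xi> \<and> norm \<xi> < \<rho>2" using n\<xi> by (simp add: \<rho>_def)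
    have sX: "summable X" and G\<xi>: "G \<xi> = q \<xi> powr of_real (real l / real m - 1) * suminf X"
      using \<rho>2(2) n\<xi>2 unfolding X_def q_def by blast+
    have Phiw: "Phi w = E * suminf X"
      using sums_unique2[OF ES sums_mult[OF summable_sums[OF sX]]] .
    have \<xi>D: "\<xi> \<in> Delta" using exp_Omega(1)[OF wO] by (simp add: \<xi>_def)
    have qnz: "q \<xi> \<noteq> 0" using n\<xi>(2) Delta_exp_ne1[OF \<xi>D n\<xi>(2)] by (simp add: q_def)
    have "H1 w = suminf X ^ m * ((q \<xi> powr of_real (real l / real m - 1)) ^ m * q \<xi> ^ (m - l))"
      unfolding H1_def \<xi>_def[symmetric] G\<xi> by (simp add: power_mult_distrib algebra_simps)
    also have "\<dots> = suminf X ^ m" using qP_cancel[OF qnz] by simp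
    also have "\<dots> = H2 w"
      unfolding H2_def Phiw using E_cancel[of w] by (simp add: power_mult_distrib E_def algebra_simps)
    finally show ?thesis .
  qed
  show ?thesis using that \<rho>pos inO eq by blast
qed


lemma H_eq:
  assumes w0: "w0 \<in> Omega_log"
  shows "H1 w0 = H2 w0"
proof -
  obtain \<rho> where \<rho>: "\<rho> > 0" "\<And>w. Re w < ln \<rho> \<Longrightarrow> w \<in> Omega_log" "\<And>w. Re w < ln \<rho> \<Longrightarrow> H1 w = H2 w"
    using near_zero by blast
  define S where "S = connected_component_set Omega_log w0"
  have oS: "open S" unfolding S_def using open_Omega by (rule open_connected_component)
  have cS: "connected S" unfolding S_def by (rule connected_connected_component)
  have SO: "S \<subseteq> Omega_log" unfolding S_def by (rule connected_component_subset)
  have w0S: "w0 \<in> S" unfolding S_def using w0 by simp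
  define v where "v = \<bar>Re w0\<bar> + \<bar>ln \<rho>\<bar> + 1"
  define z where "z = w0 - of_real v"
  have v: "v \<ge> 0" by (simp add: v_def)
  have seg: "closed_segment w0 z \<subseteq> Omega_log"
  proof
    fix x assume "x \<in> closed_segment w0 z"
    then obtain u where u: "0 \<le> u" "u \<le> 1" "x = (1 - u) *\<^sub>R w0 + u *\<^sub>R z"
      unfolding closed_segment_def by blast
    then have "x = w0 - of_real (u * v)" by (simp add: z_def scaleR_conv_of_real algebra_simps)
    then show "x \<in> Omega_log" using Omega_left[OF w0, of "u * v"] u v by simp
  qed
  have "closed_segment w0 z \<subseteq> S"
    unfolding S_def by (rule connected_component_maximal[OF _ connected_segment seg]) simp
  then have zS: "z \<in> S" by auto
  have zR: "Re z < ln \<rho>" by (simp add: z_def v_def)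
  define U where "U = S \<inter> {w. Re w < ln \<rho>}"
  have oU: "open U" unfolding U_def using oS by (intro open_Int open_halfspace_Re_lt)
  have zU: "z \<in> U" using zS zR by (simp add: U_def)
  have "(\<lambda>w. H1 w - H2 w) w0 = 0"
  proof (rule analytic_continuation[OF _ oS cS _ zS _ _ w0S, of _ U])
    show "(\<lambda>w. H1 w - H2 w) holomorphic_on S"
      using H1_holo H2_holo SO by (intro holomorphic_intros) (auto intro: holomorphic_on_subset)
    show "U \<subseteq> S" by (simp add: U_def)
    show "z islimpt U" using oU zU by (rule open_imp_islimpt)
    show "\<And>w. w \<in> U \<Longrightarrow> H1 w - H2 w = 0" using \<rho>(3) by (simp add: U_def)
  qed
  then show ?thesis by simp
qed


lemma Phi_bound:
  assumes wO: "w \<in> Omega_log"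
  shows "norm (Phi w) \<le> A * exp (B * norm (exp w)) / exp ((real m - 1) / real m * Re w)"
proof -
  define bd where "bd = A * exp (B * norm (exp w)) / exp ((real m - 1) / real m * Re w)"
  have Fb: "norm (F (w + 2 * pi * \<i> * of_nat j)) \<le> bd" for j
  proof -
    have O: "w + 2 * pi * \<i> * of_nat j \<in> Omega_log" by (rule Omega_shift[OF wO])
    have "norm (F (w + 2 * pi * \<i> * of_nat j)) * exp ((real m - 1) / real m * Re w) \<le> A * exp (B * norm (exp w))"
      using F_bound[OF O] by (simp add: exp_2piij)
    then show ?thesis unfolding bd_def by (simp add: pos_le_divide_eq)
  qed
  have "norm (\<Sum>j<m. exp (- (2*pi*\<i>* of_nat j* of_nat l/ of_nat m)) * F (w + 2 * pi * \<i> * of_nat j))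
        \<le> (\<Sum>j<m. norm (exp (- (2*pi*\<i>* of_nat j* of_nat l/ of_nat m)) * F (w + 2 * pi * \<i> * of_nat j)))"
    by (rule norm_sum)
  also have "\<dots> = (\<Sum>j<m. norm (F (w + 2 * pi * \<i> * of_nat j)))"
  proof (rule sum.cong[OF refl])
    fix j
    have "norm (exp (- (2*pi*\<i>* of_nat j* of_nat l/ of_nat m))) = 1"
      by (simp add: norm_exp_eq_Re)
    then show "norm (exp (- (2*pi*\<i>* of_nat j* of_nat l/ of_nat m)) * F (w + 2 * pi * \<i> * of_nat j)) = norm (F (w + 2 * pi * \<i> * of_nat j))"
      by (simp add: norm_mult)
  qed
  also have "\<dots> \<le> (\<Sum>j<m. bd)" by (intro sum_mono Fb)
  also have "\<dots> = of_nat m * bd" by simp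
  finally have N: "norm (\<Sum>j<m. exp (- (2*pi*\<i>* of_nat j* of_nat l/ of_nat m)) * F (w + 2 * pi * \<i> * of_nat j)) \<le> real m * bd"
    by simp
  have mp: "real m > 0" using m by simp
  have "norm (Phi w) = norm (\<Sum>j<m. exp (- (2*pi*\<i>* of_nat j* of_nat l/ of_nat m)) * F (w + 2 * pi * \<i> * of_nat j)) / real m"
    unfolding Phi_def by (simp add: norm_divide)
  also have "\<dots> \<le> bd" using N mp by (simp add: pos_divide_le_eq mult.commute)
  finally show ?thesis by (simp add: bd_def)
qed

lemma G_bound:
  assumes \<xi>: "\<xi> \<in> Delta" "\<xi> \<noteq> 0"
  shows "norm (G \<xi>) \<le> A * exp (B * norm \<xi>) / exp ((real m - 1) / real m * ln (norm \<xi>))"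
proof -
  define w where "w = Ln \<xi>"
  have ew: "exp w = \<xi>" using \<xi> by (simp add: w_def)
  have wO: "w \<in> Omega_log" using \<xi> ew by (simp add: Omega_log_def)
  have Rew: "Re w = ln (norm \<xi>)" using \<xi> by (simp add: w_def Re_Ln)
  have "H1 w = H2 w" by (rule H_eq[OF wO])
  then have eq: "G \<xi> ^ m * q \<xi> ^ (m - l) = \<xi> ^ (m - l) * Phi w ^ m"
    unfolding H1_def H2_def ew by (simp add: exp_of_nat_mult ew)
  define D where "D = norm (1 - exp (- \<xi>))"
  have Dnz: "1 - exp (- \<xi>) \<noteq> 0" using Delta_exp_ne1[OF \<xi>] by simp
  have Dpos: "D > 0" using Dnz by (simp add: D_def)
  have D1: "D < 1"
  proof -
    have "exp (- \<xi>) \<in> ball 1 1" using \<xi>(1) by (simp add: Delta_char)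
    then show ?thesis by (simp add: D_def dist_norm)
  qed
  have nq: "norm (q \<xi>) = norm \<xi> / D" by (simp add: q_def D_def norm_divide)
  have "norm (G \<xi>) ^ m * (norm \<xi> / D) ^ (m - l) = norm \<xi> ^ (m - l) * norm (Phi w) ^ m"
    using arg_cong[OF eq, of norm] by (simp add: norm_mult norm_power nq)
  then have "norm (G \<xi>) ^ m * norm \<xi> ^ (m - l) = norm \<xi> ^ (m - l) * (D ^ (m - l) * norm (Phi w) ^ m)"
    using Dpos by (simp add: power_divide field_simps)
  then have Gm: "norm (G \<xi>) ^ m = D ^ (m - l) * norm (Phi w) ^ m"
    using \<xi>(2) by (simp add: mult.commute)
  also have "\<dots> \<le> 1 * norm (Phi w) ^ m"
    using Dpos D1 by (intro mult_right_mono power_le_one) auto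
  finally have "norm (G \<xi>) ^ Suc (m - 1) \<le> norm (Phi w) ^ Suc (m - 1)" using m by simp
  then have "norm (G \<xi>) \<le> norm (Phi w)" by (rule power_le_imp_le_base) simp
  also have "\<dots> \<le> A * exp (B * norm (exp w)) / exp ((real m - 1) / real m * Re w)"
    by (rule Phi_bound[OF wO])
  finally show ?thesis by (simp add: ew Rew)
qed

end

context Gset begin

lemma G_s_bound:
  assumes s: "s \<in> ball 1 1" "1/2 \<le> norm (1 - s)" and b: "\<beta> \<ge> B" and Bpos: "B > 0" and Apos: "A > 0"
  shows "norm (G (- Ln s)) \<le> 3 * A * exp (B * pi) * exp (2 * \<beta> * ln 2) * norm s powr (-\<beta>)"
proof -
  define \<xi> where "\<xi> = - Ln s"
  have \<xi>D: "\<xi> \<in> Delta" using s(1) by (auto simp: Delta_def \<xi>_def)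
  have snz: "s \<noteq> 0" using s(1) by auto
  have es: "exp (- \<xi>) = s" using snz by (simp add: \<xi>_def)
  have \<xi>3: "norm \<xi> \<ge> 1/3"
  proof (rule ccontr)
    assume "\<not> norm \<xi> \<ge> 1/3"
    then have lt: "norm (- \<xi>) < 1/3" by simp
    then have "norm (exp (- \<xi>) - 1) \<le> 3 / 2 * norm (- \<xi>)"
      by (intro norm_exp_bounds(2)) simp
    also have "\<dots> < 1/2" using lt by simp
    finally have "norm (s - 1) < 1/2" using es by simp
    then show False using s(2) by (simp add: norm_minus_commute)
  qed
  have \<xi>nz: "\<xi> \<noteq> 0" using \<xi>3 by auto
  have Gb: "norm (G \<xi>) \<le> A * exp (B * norm \<xi>) / exp ((real m - 1) / real m * ln (norm \<xi>))"
    by (rule G_bound[OF \<xi>D \<xi>nz])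
  define c where "c = (real m - 1) / real m"
  have c: "0 \<le> c" "c \<le> 1" using m by (auto simp: c_def)
  have "c * ln (norm \<xi>) \<ge> - ln 3"
  proof (cases "ln (norm \<xi>) \<ge> 0")
    case True
    then have "0 \<le> c * ln (norm \<xi>)" using c by simp
    moreover have "ln 3 > (0::real)" by simp
    ultimately show ?thesis by linarith
  next
    case False
    have "ln (norm \<xi>) \<ge> ln (1/3)" using \<xi>3 by (subst ln_le_cancel_iff) auto
    then have "ln (norm \<xi>) \<ge> - ln 3" by (simp add: ln_div)
    moreover have "c * ln (norm \<xi>) \<ge> 1 * ln (norm \<xi>)" using False c by (intro mult_right_mono_neg) auto
    ultimately show ?thesis by simp
  qed
  then have "exp (c * ln (norm \<xi>)) \<ge> exp (- ln 3)" by simp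
  then have ec: "exp (c * ln (norm \<xi>)) \<ge> 1/3" by (simp add: exp_minus)
  have G3: "norm (G \<xi>) \<le> 3 * A * exp (B * norm \<xi>)"
  proof -
    have "A * exp (B * norm \<xi>) / exp (c * ln (norm \<xi>)) \<le> A * exp (B * norm \<xi>) / (1/3)"
      using ec Apos by (intro divide_left_mono) auto
    then show ?thesis using Gb by (simp add: c_def)
  qed
  have ns2: "norm s < 2"
  proof -
    have "norm s \<le> norm (s - 1) + 1" using norm_triangle_ineq[of "s - 1" 1] by simp
    moreover have "norm (s - 1) < 1" using s(1) by (simp add: dist_norm norm_minus_commute)
    ultimately show ?thesis by simp
  qed
  have nspos: "norm s > 0" using snz by simp
  have Re\<xi>: "Re \<xi> = - ln (norm s)" using snz by (simp add: \<xi>_def)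
  have Im\<xi>: "\<bar>Im \<xi>\<bar> \<le> pi"
    using mpi_less_Im_Ln[OF snz] Im_Ln_le_pi[OF snz] by (simp add: \<xi>_def)
  have lnb: "\<bar>ln (norm s)\<bar> \<le> - ln (norm s) + 2 * ln 2"
  proof -
    have "ln (norm s) < ln 2" using ns2 nspos by simp
    moreover have "ln 2 > (0::real)" by simp
    ultimately show ?thesis by (cases "0 \<le> ln (norm s)") (simp_all add: abs_real_def)
  qed
  have L: "- ln (norm s) + 2 * ln 2 \<ge> 0"
  proof -
    have "ln (norm s) < ln 2" using ns2 nspos by simp
    moreover have "ln 2 > (0::real)" by simp
    ultimately show ?thesis by linarith
  qed
  have "norm \<xi> \<le> \<bar>Re \<xi>\<bar> + \<bar>Im \<xi>\<bar>" by (rule cmod_le)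
  then have n\<xi>: "norm \<xi> \<le> (- ln (norm s) + 2 * ln 2) + pi" using Re\<xi> Im\<xi> lnb by simp
  have "B * norm \<xi> \<le> B * ((- ln (norm s) + 2 * ln 2) + pi)" using n\<xi> Bpos by simp
  also have "\<dots> = B * (- ln (norm s) + 2 * ln 2) + B * pi" by (simp add: algebra_simps)
  also have "B * (- ln (norm s) + 2 * ln 2) \<le> \<beta> * (- ln (norm s) + 2 * ln 2)"
    using b L by (intro mult_right_mono) auto
  finally have "B * norm \<xi> \<le> \<beta> * (- ln (norm s)) + 2 * \<beta> * ln 2 + B * pi" by (simp add: algebra_simps)
  then have "exp (B * norm \<xi>) \<le> exp (\<beta> * (- ln (norm s)) + 2 * \<beta> * ln 2 + B * pi)" by simp
  also have "\<dots> = exp (\<beta> * (- ln (norm s))) * exp (2 * \<beta> * ln 2) * exp (B * pi)"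
    by (simp only: exp_add)
  also have "exp (\<beta> * (- ln (norm s))) = norm s powr (-\<beta>)"
    using nspos by (simp add: powr_def)
  finally have "exp (B * norm \<xi>) \<le> norm s powr (-\<beta>) * exp (2 * \<beta> * ln 2) * exp (B * pi)" .
  then have "3 * A * exp (B * norm \<xi>) \<le> 3 * A * (norm s powr (-\<beta>) * exp (2 * \<beta> * ln 2) * exp (B * pi))"
    using Apos by simp
  with G3 show ?thesis unfolding \<xi>_def by (simp add: algebra_simps)
qed

end

theorem lemma5p4:
  fixes m :: nat and a :: "nat \<Rightarrow> complex" and F :: "complex \<Rightarrow> complex"
    and A B :: real and G :: "nat \<Rightarrow> complex \<Rightarrow> complex" and d :: "nat \<Rightarrow> complex"
  assumes m: "m \<ge> 1"
    and gev: "gevrey1 m a"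
    and F_holo: "F holomorphic_on Omega_log"
    and F_periodic: "\<And>w. w \<in> Omega_log \<Longrightarrow> F (w + 2 * pi * \<i> * of_nat m) = F w"
    and F_borel: "\<exists>\<rho>>0. \<forall>w\<in>Omega_log. norm (exp w) < \<rho> \<longrightarrow>
        (\<lambda>n. a (Suc n) * exp (of_real (real (Suc n) / real m - 1) * w)
                / of_real (Gamma (real (Suc n) / real m))) sums F w"
    and AB: "A > 0" "B > 0"
    and F_bound: "\<And>w. w \<in> Omega_log \<Longrightarrow>
        norm (F w) * exp ((real m - 1) / real m * Re w) \<le> A * exp (B * norm (exp w))"
    and G_holo: "\<And>l. l \<in> {1..m} \<Longrightarrow> G l holomorphic_on Delta"
    and G_germ: "\<And>l. l \<in> {1..m} \<Longrightarrow> \<exists>\<rho>>0. \<forall>\<xi>. 0 < norm \<xi> \<and> norm \<xi> < \<rho> \<longrightarrow>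
        summable (\<lambda>k. a (l + m * k) * \<xi> ^ k / of_real (Gamma (real l / real m + real k))) \<and>
        G l \<xi> = (\<xi> / (1 - exp (- \<xi>))) powr of_real (real l / real m - 1)
          * (\<Sum>k. a (l + m * k) * \<xi> ^ k / of_real (Gamma (real l / real m + real k)))"
    and d_def: "\<And>l s. l \<in> {1..m} \<Longrightarrow> s \<in> ball 1 1 \<Longrightarrow>
        (\<lambda>j. d (l + m * j) * (1 - s) ^ j) sums G l (- Ln s)"
  shows "\<forall>C. C > max B 1 \<longrightarrow>
    summable (\<lambda>n. norm (d (Suc n)) / (real (Suc n) / real m) powr C)"
proof (intro allI impI)
  fix C :: real assume C: "C > max B 1"
  define \<beta> where "\<beta> = (max B 1 + C) / 2"
  have \<beta>: "\<beta> > 1" "\<beta> \<ge> B" "\<beta> < C" using C by (auto simp: \<beta>_def)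
  have coef: "\<exists>K. \<forall>j. norm (d (l + m * j)) \<le> K * (real j + 2) powr (\<beta> - 1)" if lmem: "l \<in> {1..m}" for l
  proof -
    interpret I: Gset m l a F "G l" A B
      using m lmem F_holo F_borel F_bound G_holo[OF lmem] G_germ[OF lmem] by unfold_locales auto
    define M where "M = 3 * A * exp (B * pi) * exp (2 * \<beta> * ln 2)"
    have M: "M \<ge> 0" using AB by (simp add: M_def)
    have holo: "(\<lambda>t. G l (- Ln (1 - t))) holomorphic_on ball 0 1"
    proof -
      have "(\<lambda>t. - Ln (1 - t)) holomorphic_on ball 0 1"
      proof (intro holomorphic_intros)
        fix t :: complex assume "t \<in> ball 0 1"
        then have "Re (1 - t) > 0" using complex_Re_le_cmod[of t] by simp
        then show "1 - t \<notin> \<real>\<^sub>\<le>\<^sub>0" by (auto simp: complex_nonpos_Reals_iff)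
      qed
      moreover have "(\<lambda>t. - Ln (1 - t)) ` ball 0 1 \<subseteq> Delta"
        unfolding Delta_def by (auto simp: dist_norm)
      ultimately have "(G l \<circ> (\<lambda>t. - Ln (1 - t))) holomorphic_on ball 0 1"
        by (rule holomorphic_on_compose_gen[OF _ G_holo[OF lmem]])
      then show ?thesis by (simp add: o_def)
    qed
    have ser: "(\<lambda>j. d (l + m * j) * t ^ j) sums G l (- Ln (1 - t))" if "t \<in> ball 0 1" for t
    proof -
      have "1 - t \<in> ball 1 1" using that by (simp add: dist_norm)
      from d_def[OF lmem this] show ?thesis by simp
    qed
    have bnd: "norm (G l (- Ln (1 - t))) \<le> M * norm (1 - t) powr (-\<beta>)"
      if "1/2 \<le> norm t" "norm t < 1" for t
    proof -
      have "1 - t \<in> ball 1 1" using that by (simp add: dist_norm)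
      moreover have "1/2 \<le> norm (1 - (1 - t))" using that by simp
      ultimately show ?thesis unfolding M_def
        using I.G_s_bound[of "1 - t" \<beta>] \<beta> AB by simp
    qed
    from coeff_bound[OF holo ser bnd \<beta>(1) M] show ?thesis by blast
  qed
  then have "\<forall>l\<in>{1..m}. \<exists>K. \<forall>j. norm (d (l + m * j)) \<le> K * (real j + 2) powr (\<beta> - 1)" by blast
  then obtain K where K: "\<And>l j. l \<in> {1..m} \<Longrightarrow> norm (d (l + m * j)) \<le> K l * (real j + 2) powr (\<beta> - 1)"
    by metis
  define K0 where "K0 = (\<Sum>l\<in>{1..m}. \<bar>K l\<bar>)"
  have K0: "\<bar>K l\<bar> \<le> K0" if "l \<in> {1..m}" for l
    unfolding K0_def using that by (intro member_le_sum) auto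
  have K0pos: "K0 \<ge> 0" unfolding K0_def by (intro sum_nonneg) auto
  define cst where "cst = K0 * 2 powr (\<beta> - 1) * real m powr C"
  have mpos: "real m > 0" using m by simp
  have trm: "norm (norm (d (Suc n)) / (real (Suc n) / real m) powr C) \<le> cst * real (Suc n) powr (\<beta> - 1 - C)" for n
  proof -
    define l where "l = n mod m + 1"
    define j where "j = n div m"
    have "n mod m < m" using m by simp
    then have l: "l \<in> {1..m}" by (auto simp: l_def)
    have Sn: "Suc n = l + m * j" by (simp add: l_def j_def)
    have jn: "real j + 2 \<le> 2 * real (Suc n)"
    proof -
      have "j \<le> n" unfolding j_def by (rule div_le_dividend)
      then show ?thesis by simp
    qed
    have "norm (d (Suc n)) \<le> K l * (real j + 2) powr (\<beta> - 1)" using K[OF l, of j] Sn by simp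
    also have "\<dots> \<le> K0 * (real j + 2) powr (\<beta> - 1)"
      using K0[OF l] by (intro mult_right_mono) auto
    also have "\<dots> \<le> K0 * (2 * real (Suc n)) powr (\<beta> - 1)"
      using jn \<beta> K0pos by (intro mult_left_mono powr_mono2) auto
    also have "\<dots> = K0 * 2 powr (\<beta> - 1) * real (Suc n) powr (\<beta> - 1)"
      using powr_mult[of 2 "real (Suc n)" "\<beta> - 1"] by (simp only: mult.assoc)
    finally have dn: "norm (d (Suc n)) \<le> K0 * 2 powr (\<beta> - 1) * real (Suc n) powr (\<beta> - 1)" .
    have den: "(real (Suc n) / real m) powr C = real (Suc n) powr C / real m powr C"
      by (simp add: powr_divide)
    have dpos: "(real (Suc n) / real m) powr C > 0" using mpos by simp
    have "norm (norm (d (Suc n)) / (real (Suc n) / real m) powr C) = norm (d (Suc n)) / (real (Suc n) / real m) powr C"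
      by simp
    also have "\<dots> \<le> K0 * 2 powr (\<beta> - 1) * real (Suc n) powr (\<beta> - 1) / (real (Suc n) / real m) powr C"
      using dn dpos by (intro divide_right_mono) auto
    also have "\<dots> = cst * (real (Suc n) powr (\<beta> - 1) / real (Suc n) powr C)"
      unfolding den cst_def using mpos by (simp add: field_simps)
    also have "real (Suc n) powr (\<beta> - 1) / real (Suc n) powr C = real (Suc n) powr (\<beta> - 1 - C)"
      by (simp add: powr_diff)
    finally show ?thesis .
  qed
  have "summable (\<lambda>n. real n powr (\<beta> - 1 - C))"
    using \<beta> by (subst summable_real_powr_iff) simp
  then have "summable (\<lambda>n. real (Suc n) powr (\<beta> - 1 - C))"
    by (subst summable_Suc_iff)
  then have "summable (\<lambda>n. cst * real (Suc n) powr (\<beta> - 1 - C))"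
    by (rule summable_mult)
  then show "summable (\<lambda>n. norm (d (Suc n)) / (real (Suc n) / real m) powr C)"
    using trm by (rule summable_comparison_test')
qed

end
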